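(* Let $q=n-k$, write $\mathbb R^n=\mathbb R^k\times\mathbb R^q$, let $E\subset\mathbb R^q$ be open and $B\colon E\to\mathrm{Hom}(\mathbb R^k,\mathbb R^q)$ continuous, and for $y\in E$ let $P_y=\{(t,\,y+B(y)t):t\in\mathbb R^k\}$. Suppose the planes $P_y$, $y\in E$, form a fibration of an open subset $T\subset\mathbb R^n$. Define $A\colon E\to\mathrm{Hom}(\mathbb R^{k+1},\mathbb R^q)$ by $A(y)(t,\lambda)=B(y)t+\lambda y$. Then the fibration is skew if and only if $\mathrm{Ker}(A(x)-A(y))=0$ for every pair of distinct $x,y\in E$.
   Context: A fibration of an open set $T$ by oriented affine $k$-planes is a family of pairwise disjoint oriented affine $k$-planes with union $T$ such that the map sending a point to its fiber is continuous. It is skew if any two distinct fibers are disjoint and contain no parallel lines. *)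

theory Defs
  imports "HOL-Analysis.Analysis"
begin

text \<open>R^n = R^k x R^q is modelled as the product type (real^'k) \<times> (real^'q).
  Hom(R^k,R^q) is modelled by q x k matrices real^'k^'q acting via *v.\<close>

definition plane :: "(real^'q::finite \<Rightarrow> real^'k::finite^'q) \<Rightarrow> real^'q \<Rightarrow> ((real^'k) \<times> (real^'q)) set" where
  "plane B y = {(t, y + B y *v t) | t. True}"

definition is_fibration :: "(real^'q) set \<Rightarrow> (real^'q \<Rightarrow> real^'k^'q) \<Rightarrow> ((real^'k::finite) \<times> (real^'q::finite)) set \<Rightarrow> bool" where
  "is_fibration E B T \<longleftrightarrow>
     open T \<and>
     (\<forall>x\<in>E. \<forall>y\<in>E. x \<noteq> y \<longrightarrow> plane B x \<inter> plane B y = {}) \<and>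
     (\<Union>y\<in>E. plane B y) = T \<and>
     continuous_on T (\<lambda>p. THE y. y \<in> E \<and> p \<in> plane B y)"

definition contains_line_dir :: "'a::real_vector set \<Rightarrow> 'a \<Rightarrow> bool" where
  "contains_line_dir S v \<longleftrightarrow> v \<noteq> 0 \<and> (\<exists>a. \<forall>s::real. a + s *\<^sub>R v \<in> S)"

definition is_skew :: "(real^'q) set \<Rightarrow> (real^'q \<Rightarrow> real^'k^'q) \<Rightarrow> bool" where
  "is_skew E B \<longleftrightarrow>
     (\<forall>x\<in>E. \<forall>y\<in>E. x \<noteq> y \<longrightarrow>
        plane B x \<inter> plane B y = {} \<and>
        \<not> (\<exists>v::(real^'k::finite) \<times> (real^'q::finite). contains_line_dir (plane B x) v \<and> contains_line_dir (plane B y) v))"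

definition Amap :: "(real^'q \<Rightarrow> real^'k^'q) \<Rightarrow> real^'q \<Rightarrow> (real^'k::finite) \<times> real \<Rightarrow> real^'q::finite" where
  "Amap B y = (\<lambda>(t, l). B y *v t + l *\<^sub>R y)"

end

theory Submission
  imports Defs
begin

lemma line_iff:
  fixes B :: "real^'q::finite \<Rightarrow> real^'k::finite^'q"
  shows "contains_line_dir (plane B x) (u, w) \<longleftrightarrow> u \<noteq> 0 \<and> w = B x *v u"
proof
  assume h: "contains_line_dir (plane B x) (u, w)"
  then have nz: "(u, w) \<noteq> 0" and "\<exists>a. \<forall>s::real. a + s *\<^sub>R (u, w) \<in> plane B x"
    unfolding contains_line_dir_def by auto
  then obtain a1 a2 where a: "\<forall>s::real. (a1, a2) + s *\<^sub>R (u, w) \<in> plane B x" by auto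
  from a[rule_format, of 0] have e0: "a2 = x + B x *v a1" by (auto simp: plane_def)
  from a[rule_format, of 1] have e1: "a2 + w = x + B x *v (a1 + u)" by (auto simp: plane_def)
  have wB: "w = B x *v u" using e0 e1 by (simp add: matrix_vector_right_distrib)
  moreover have "u \<noteq> 0" using nz wB by (auto simp: zero_prod_def)
  ultimately show "u \<noteq> 0 \<and> w = B x *v u" by simp
next
  assume h: "u \<noteq> 0 \<and> w = B x *v u"
  have "\<forall>s::real. (0, x) + s *\<^sub>R (u, w) \<in> plane B x"
  proof
    fix s :: real
    have "(0, x) + s *\<^sub>R (u, w) = (s *\<^sub>R u, x + B x *v (s *\<^sub>R u))"
      using h by (simp add: matrix_vector_mult_scaleR)
    then show "(0, x) + s *\<^sub>R (u, w) \<in> plane B x" unfolding plane_def by blast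
  qed
  moreover have "(u, w) \<noteq> 0" using h by (simp add: zero_prod_def)
  ultimately show "contains_line_dir (plane B x) (u, w)"
    unfolding contains_line_dir_def by blast
qed

lemma meet_iff:
  fixes B :: "real^'q::finite \<Rightarrow> real^'k::finite^'q"
  shows "plane B x \<inter> plane B y \<noteq> {} \<longleftrightarrow> (\<exists>t. x + B x *v t = y + B y *v t)"
  unfolding plane_def by auto

lemma amap_diff:
  "Amap B x (t, l) - Amap B y (t, l) = (B x *v t - B y *v t) + l *\<^sub>R (x - y)"
  unfolding Amap_def by (simp add: algebra_simps)

lemma pair_skew:
  fixes B :: "real^'q::finite \<Rightarrow> real^'k::finite^'q"
  shows "(plane B x \<inter> plane B y = {} \<and>
        \<not> (\<exists>v::(real^'k) \<times> (real^'q). contains_line_dir (plane B x) v \<and> contains_line_dir (plane B y) v))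
     \<longleftrightarrow> {w. Amap B x w - Amap B y w = 0} = {0}"
proof
  assume L: "plane B x \<inter> plane B y = {} \<and>
        \<not> (\<exists>v::(real^'k) \<times> (real^'q). contains_line_dir (plane B x) v \<and> contains_line_dir (plane B y) v)"
  show "{w. Amap B x w - Amap B y w = 0} = {0}"
  proof (rule set_eqI, rule iffI)
    fix w assume "w \<in> {w. Amap B x w - Amap B y w = 0}"
    moreover obtain t l where w: "w = (t, l)" by (cases w)
    ultimately have k: "(B x *v t - B y *v t) + l *\<^sub>R (x - y) = 0" using amap_diff[of B x t l y] by simp
    show "w \<in> {0}"
    proof (cases "l = 0")
      case True
      then have eq: "B x *v t = B y *v t" using k by simp
      have "t = 0"
      proof (rule ccontr)
        assume "t \<noteq> 0"
        then have "contains_line_dir (plane B x) (t, B x *v t) \<and> contains_line_dir (plane B y) (t, B x *v t)"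
          using eq line_iff by metis
        then show False using L by blast
      qed
      then show ?thesis using True w by (simp add: zero_prod_def)
    next
      case False
      define t' where "t' = (1/l) *\<^sub>R t"
      have "(1/l) *\<^sub>R ((B x *v t - B y *v t) + l *\<^sub>R (x - y)) = 0" using k by simp
      then have "B x *v t' - B y *v t' + (x - y) = 0"
        using False unfolding t'_def by (simp add: algebra_simps matrix_vector_mult_scaleR)
      then have "x + B x *v t' = y + B y *v t'" by (simp add: algebra_simps)
      then have "plane B x \<inter> plane B y \<noteq> {}" using meet_iff by metis
      then show ?thesis using L by blast
    qed
  next
    fix w assume "w \<in> {0::(real^'k) \<times> real}"
    then show "w \<in> {w. Amap B x w - Amap B y w = 0}" by (simp add: Amap_def zero_prod_def)
  qed
next
  assume R: "{w. Amap B x w - Amap B y w = 0} = {0}"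
  have "plane B x \<inter> plane B y = {}"
  proof (rule ccontr)
    assume "plane B x \<inter> plane B y \<noteq> {}"
    then obtain t where "x + B x *v t = y + B y *v t" using meet_iff by metis
    then have "Amap B x (t, 1) - Amap B y (t, 1) = 0" unfolding amap_diff by (simp add: algebra_simps)
    then have "(t, 1::real) \<in> {0}" using R by blast
    then show False by (simp add: zero_prod_def)
  qed
  moreover have "\<not> (\<exists>v::(real^'k) \<times> (real^'q). contains_line_dir (plane B x) v \<and> contains_line_dir (plane B y) v)"
  proof
    assume "\<exists>v::(real^'k) \<times> (real^'q). contains_line_dir (plane B x) v \<and> contains_line_dir (plane B y) v"
    then obtain u w where "contains_line_dir (plane B x) (u, w)" "contains_line_dir (plane B y) (u, w)" by auto
    then have u: "u \<noteq> 0" and "B x *v u = B y *v u" using line_iff by metis+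
    then have "Amap B x (u, 0) - Amap B y (u, 0) = 0" unfolding amap_diff by simp
    then have "(u, 0::real) \<in> {0}" using R by blast
    then show False using u by (simp add: zero_prod_def)
  qed
  ultimately show "plane B x \<inter> plane B y = {} \<and>
        \<not> (\<exists>v::(real^'k) \<times> (real^'q). contains_line_dir (plane B x) v \<and> contains_line_dir (plane B y) v)" by blast
qed

theorem lemma3p3:
  fixes E :: "(real^'q::finite) set"
    and B :: "real^'q \<Rightarrow> real^'k::finite^'q"
    and T :: "((real^'k) \<times> (real^'q)) set"
  assumes "open E"
    and "continuous_on E B"
    and "is_fibration E B T"
  shows "is_skew E B \<longleftrightarrow>
         (\<forall>x\<in>E. \<forall>y\<in>E. x \<noteq> y \<longrightarrow> {w. Amap B x w - Amap B y w = 0} = {0})"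
  unfolding is_skew_def pair_skew by (rule refl)

end
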